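(* Let $\rho\in(0,1)$ and $0<\alpha\le\min\{1/2,2\rho,2(1-\rho)\}$. Let $\Theta=[-\alpha/20,\alpha/20]$ and for $\theta\in\Theta$ set $l_1(\theta)=\frac{4\rho-\alpha}{16-8\alpha}+\theta$, $l_2(\theta)=l_1(\theta)+\rho/2$, $r_2(\theta)=l_2(\theta)+1/4$, $r_1(\theta)=r_2(\theta)+(1-\rho)/2$, $w_1=2\pi/\rho$, $w_2=2\pi/(1-\rho)$. Define the density $f(x|\theta)=0$ for $x\notin[0,1]$ and, for $x\in[0,1]$: $f(x|\theta)=2-\alpha$ on $[0,l_1(\theta)]\cup[r_1(\theta),1]$; $f(x|\theta)=\alpha$ on $(l_2(\theta),r_2(\theta)]$; $f(x|\theta)=\alpha+(1-\alpha)(\cos(w_1(x-l_1(\theta)))+1)$ on $[l_1(\theta),l_2(\theta)]$; $f(x|\theta)=\alpha+(1-\alpha)(\cos(w_2(r_1(\theta)-x))+1)$ on $[r_2(\theta),r_1(\theta)]$. For $t\ge1$ let $X_1,\dots,X_t$ be i.i.d. with density $f(\cdot|\theta)$ and joint density $f(X_1,\dots,X_t|\theta)$. Then for every $t\ge1$ and $\theta\in\Theta$, $$I_t(\theta):=\mathbb{E}_\theta\left[\left(\frac{\partial\log f(X_1,\dots,X_t|\theta)}{\partial\theta}\right)^2\right]\le\frac{4\pi^2 t}{\rho(1-\rho)}.$$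
   Context: $I_t(\theta)$ is the Fisher information of $t$ i.i.d. samples about the parameter $\theta$; $\mathbb{E}_\theta$ is the expectation over $X_1,\dots,X_t$. *)

theory Defs
  imports "HOL-Analysis.Analysis"
begin

definition l1 :: "real \<Rightarrow> real \<Rightarrow> real \<Rightarrow> real" where
  "l1 \<rho> \<alpha> \<theta> = (4*\<rho> - \<alpha>) / (16 - 8*\<alpha>) + \<theta>"

definition l2 :: "real \<Rightarrow> real \<Rightarrow> real \<Rightarrow> real" where
  "l2 \<rho> \<alpha> \<theta> = l1 \<rho> \<alpha> \<theta> + \<rho>/2"

definition r2 :: "real \<Rightarrow> real \<Rightarrow> real \<Rightarrow> real" where
  "r2 \<rho> \<alpha> \<theta> = l2 \<rho> \<alpha> \<theta> + 1/4"

definition r1 :: "real \<Rightarrow> real \<Rightarrow> real \<Rightarrow> real" where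
  "r1 \<rho> \<alpha> \<theta> = r2 \<rho> \<alpha> \<theta> + (1 - \<rho>)/2"

definition w1 :: "real \<Rightarrow> real" where "w1 \<rho> = 2*pi/\<rho>"
definition w2 :: "real \<Rightarrow> real" where "w2 \<rho> = 2*pi/(1 - \<rho>)"

text \<open>The density f(x|theta). The pieces agree at the shared breakpoints.\<close>
definition fdens :: "real \<Rightarrow> real \<Rightarrow> real \<Rightarrow> real \<Rightarrow> real" where
  "fdens \<rho> \<alpha> \<theta> x =
     (if x < 0 \<or> x > 1 then 0
      else if x \<le> l1 \<rho> \<alpha> \<theta> \<or> x \<ge> r1 \<rho> \<alpha> \<theta> then 2 - \<alpha>
      else if x \<le> l2 \<rho> \<alpha> \<theta> then \<alpha> + (1 - \<alpha>) * (cos (w1 \<rho> * (x - l1 \<rho> \<alpha> \<theta>)) + 1)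
      else if x \<le> r2 \<rho> \<alpha> \<theta> then \<alpha>
      else \<alpha> + (1 - \<alpha>) * (cos (w2 \<rho> * (r1 \<rho> \<alpha> \<theta> - x)) + 1))"

definition joint_dens :: "real \<Rightarrow> real \<Rightarrow> nat \<Rightarrow> real \<Rightarrow> (nat \<Rightarrow> real) \<Rightarrow> real" where
  "joint_dens \<rho> \<alpha> t \<theta> X = (\<Prod>i<t. fdens \<rho> \<alpha> \<theta> (X i))"

text \<open>Fisher information I_t(theta) = E_theta[(d/dtheta log f(X_1..X_t|theta))^2],
  written as the (nonnegative) integral against the joint density over R^t.\<close>
definition fisher_info :: "real \<Rightarrow> real \<Rightarrow> nat \<Rightarrow> real \<Rightarrow> ennreal" where
  "fisher_info \<rho> \<alpha> t \<theta> =
     (\<integral>\<^sup>+ X. ennreal (joint_dens \<rho> \<alpha> t \<theta> X *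
        (deriv (\<lambda>s. ln (joint_dens \<rho> \<alpha> t s X)) \<theta>)\<^sup>2)
      \<partial>(PiM {..<t} (\<lambda>_. lborel)))"

end

theory Submission
  imports Defs
begin

lemma deriv_paste:
  fixes f g h :: "real \<Rightarrow> real"
  assumes g: "(g has_real_derivative D) (at x)" and h: "(h has_real_derivative D) (at x)"
    and d: "d > 0"
    and fg: "\<And>y. y \<le> x \<Longrightarrow> dist y x < d \<Longrightarrow> f y = g y"
    and fh: "\<And>y. y \<ge> x \<Longrightarrow> dist y x < d \<Longrightarrow> f y = h y"
  shows "(f has_real_derivative D) (at x)"
proof -
  have 1: "(f has_real_derivative D) (at x within {..x})"
    by (rule has_field_derivative_transform_within[OF has_field_derivative_at_within[OF g] d])
       (auto intro: fg[symmetric])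
  have 2: "(f has_real_derivative D) (at x within {x..})"
    by (rule has_field_derivative_transform_within[OF has_field_derivative_at_within[OF h] d])
       (auto intro: fh[symmetric])
  have "{..x} \<union> {x..} = (UNIV::real set)" by auto
  then show ?thesis using 1 2 unfolding has_field_derivative_iff
    by (metis Lim_within_Un)
qed

definition pw :: "real \<Rightarrow> real \<Rightarrow> real \<Rightarrow> real \<Rightarrow> (real \<Rightarrow> real) \<Rightarrow> (real \<Rightarrow> real) \<Rightarrow> (real \<Rightarrow> real) \<Rightarrow> (real \<Rightarrow> real) \<Rightarrow> (real \<Rightarrow> real) \<Rightarrow> real \<Rightarrow> real" where
  "pw a b c e f0 f1 f2 f3 f4 u = (if u \<le> a then f0 u else if u \<le> b then f1 u else if u \<le> c then f2 u else if u \<le> e then f3 u else f4 u)"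

lemma pw_deriv:
  assumes abce: "a < b" "b < c" "c < e"
    and d0: "\<And>u. (f0 has_real_derivative d0 u) (at u)"
    and d1: "\<And>u. (f1 has_real_derivative d1 u) (at u)"
    and d2: "\<And>u. (f2 has_real_derivative d2 u) (at u)"
    and d3: "\<And>u. (f3 has_real_derivative d3 u) (at u)"
    and d4: "\<And>u. (f4 has_real_derivative d4 u) (at u)"
    and m: "f0 a = f1 a" "d0 a = d1 a" "f1 b = f2 b" "d1 b = d2 b" "f2 c = f3 c" "d2 c = d3 c"
      "f3 e = f4 e" "d3 e = d4 e"
  shows "(pw a b c e f0 f1 f2 f3 f4 has_real_derivative pw a b c e d0 d1 d2 d3 d4 u) (at u)"
proof -
  consider "u < a" | "u = a" | "a < u \<and> u < b" | "u = b" | "b < u \<and> u < c" | "u = c"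
    | "c < u \<and> u < e" | "u = e" | "e < u" by linarith
  then show ?thesis
  proof cases
    case 1
    have e: "pw a b c e d0 d1 d2 d3 d4 u = d0 u" using 1 abce m by (auto simp: pw_def)
    show ?thesis unfolding e
      by (rule deriv_paste[OF d0 d0, of "a - u"]) (use 1 in \<open>auto simp: pw_def dist_real_def\<close>)
  next
    case 2
    have e: "pw a b c e d0 d1 d2 d3 d4 u = d0 u" using 2 abce m by (auto simp: pw_def)
    show ?thesis unfolding e
      by (rule deriv_paste[OF d0, where d="b - a" and h="f1"]) (use 2 abce m d1[of u] in \<open>auto simp: pw_def dist_real_def\<close>)
  next
    case 3
    have e: "pw a b c e d0 d1 d2 d3 d4 u = d1 u" using 3 abce m by (auto simp: pw_def)
    show ?thesis unfolding e
      by (rule deriv_paste[OF d1 d1, of "min (u - a) (b - u)"]) (use 3 in \<open>auto simp: pw_def dist_real_def\<close>)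
  next
    case 4
    have e: "pw a b c e d0 d1 d2 d3 d4 u = d1 u" using 4 abce m by (auto simp: pw_def)
    show ?thesis unfolding e
      by (rule deriv_paste[OF d1, where d="min (b - a) (c - b)" and h="f2"]) (use 4 abce m d2[of u] in \<open>auto simp: pw_def dist_real_def\<close>)
  next
    case 5
    have e: "pw a b c e d0 d1 d2 d3 d4 u = d2 u" using 5 abce m by (auto simp: pw_def)
    show ?thesis unfolding e
      by (rule deriv_paste[OF d2 d2, of "min (u - b) (c - u)"]) (use 5 abce in \<open>auto simp: pw_def dist_real_def\<close>)
  next
    case 6
    have e: "pw a b c e d0 d1 d2 d3 d4 u = d2 u" using 6 abce m by (auto simp: pw_def)
    show ?thesis unfolding e
      by (rule deriv_paste[OF d2, where d="min (c - b) (e - c)" and h="f3"]) (use 6 abce m d3[of u] in \<open>auto simp: pw_def dist_real_def\<close>)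
  next
    case 7
    have e: "pw a b c e d0 d1 d2 d3 d4 u = d3 u" using 7 abce m by (auto simp: pw_def)
    show ?thesis unfolding e
      by (rule deriv_paste[OF d3 d3, of "min (u - c) (e - u)"]) (use 7 abce in \<open>auto simp: pw_def dist_real_def\<close>)
  next
    case 8
    have e: "pw a b c e d0 d1 d2 d3 d4 u = d3 u" using 8 abce m by (auto simp: pw_def)
    show ?thesis unfolding e
      by (rule deriv_paste[OF d3, where d="e - c" and h="f4"]) (use 8 abce m d4[of u] in \<open>auto simp: pw_def dist_real_def\<close>)
  next
    case 9
    have e: "pw a b c e d0 d1 d2 d3 d4 u = d4 u" using 9 abce m by (auto simp: pw_def)
    show ?thesis unfolding e
      by (rule deriv_paste[OF d4 d4, of "u - e"]) (use 9 abce in \<open>auto simp: pw_def dist_real_def\<close>)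
  qed
qed

lemma pw_cont:
  assumes abce: "a < b" "b < c" "c < e"
    and "continuous_on UNIV f0" "continuous_on UNIV f1" "continuous_on UNIV f2"
     "continuous_on UNIV f3" "continuous_on UNIV f4"
    and m: "f0 a = f1 a" "f1 b = f2 b" "f2 c = f3 c" "f3 e = f4 e"
  shows "continuous_on UNIV (pw a b c e f0 f1 f2 f3 f4)"
proof -
  have U: "UNIV = {..a} \<union> ({a..b} \<union> ({b..c} \<union> ({c..e} \<union> {e..})))" by auto
  have c0: "continuous_on {..a} (pw a b c e f0 f1 f2 f3 f4)"
    using continuous_on_subset[OF assms(4), of "{..a}"] by (rule continuous_on_eq) (auto simp: pw_def)
  have c1: "continuous_on {a..b} (pw a b c e f0 f1 f2 f3 f4)"
    using continuous_on_subset[OF assms(5), of "{a..b}"] by (rule continuous_on_eq) (use abce m in \<open>auto simp: pw_def\<close>)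
  have c2: "continuous_on {b..c} (pw a b c e f0 f1 f2 f3 f4)"
    using continuous_on_subset[OF assms(6), of "{b..c}"] by (rule continuous_on_eq) (use abce m in \<open>auto simp: pw_def\<close>)
  have c3: "continuous_on {c..e} (pw a b c e f0 f1 f2 f3 f4)"
    using continuous_on_subset[OF assms(7), of "{c..e}"] by (rule continuous_on_eq) (use abce m in \<open>auto simp: pw_def\<close>)
  have c4: "continuous_on {e..} (pw a b c e f0 f1 f2 f3 f4)"
    using continuous_on_subset[OF assms(8), of "{e..}"] by (rule continuous_on_eq) (use abce m in \<open>auto simp: pw_def\<close>)
  show ?thesis
    by (subst U) (intro continuous_on_closed_Un c0 c1 c2 c3 c4 closed_Un; simp)
qed


lemma cont_integrable:
  fixes H :: "real \<Rightarrow> real"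
  assumes "continuous_on {a..b} H"
  shows "integrable lborel (\<lambda>x. indicator {a..b} x * H x)"
  using borel_integrable_compact[of "{a..b}" H] assms by simp

lemma cont_LINT:
  fixes H :: "real \<Rightarrow> real"
  assumes c: "continuous_on {a..b} H" and h: "(H has_integral I) {a..b}"
  shows "(LINT x|lborel. indicator {a..b} x * H x) = I"
proof -
  have si: "set_integrable lborel {a..b} H"
    unfolding set_integrable_def using borel_integrable_compact[of "{a..b}" H] c by simp
  have "(LINT x:{a..b}|lborel. H x) = integral {a..b} H"
    by (rule set_borel_integral_eq_integral(2)[OF si])
  also have "\<dots> = I" using h by (rule integral_unique)
  finally show ?thesis unfolding set_lebesgue_integral_def by simp
qed

lemma ratio_bound:
  fixes a W y :: real
  assumes "0 < a" "a \<le> 1"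
  shows "((1-a)*W* sin y)^2 / (a + (1-a)*(cos y + 1)) \<le> 2*W^2"
proof -
  have c1: "-1 \<le> cos y" "cos y \<le> 1" by simp_all
  have den: "a + (1-a)*(cos y + 1) > 0"
    using assms c1 by (smt (verit) mult_nonneg_nonneg)
  have s2: "(sin y)^2 = (1 - cos y) * (1 + cos y)"
    using sin_squared_eq[of y] by (simp add: algebra_simps power2_eq_square)
  have "(1-a)^2 * ((1 - cos y) * (1 + cos y)) \<le> (1-a) * (2 * (1 + cos y))"
  proof -
    have "(1-a)*(1-a) \<le> 1*(1-a)" by (rule mult_right_mono) (use assms in auto)
    hence "(1-a)^2 \<le> (1-a)" by (simp add: power2_eq_square)
    moreover have "(1 - cos y) * (1 + cos y) \<le> 2 * (1 + cos y)"
    proof (rule mult_right_mono)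
      show "1 - cos y \<le> 2" using c1 by linarith
      show "0 \<le> 1 + cos y" using c1 by linarith
    qed
    moreover have c2: "0 \<le> 1 + cos y" "0 \<le> 1 - cos y" using c1 by linarith+
    ultimately show ?thesis
      by (intro mult_mono) (use assms c2 in \<open>auto intro: mult_nonneg_nonneg\<close>)
  qed
  also have "\<dots> \<le> 2 * (a + (1-a)*(cos y + 1))" using assms by (simp add: algebra_simps)
  finally have k: "(1-a)^2 * (sin y)^2 \<le> 2 * (a + (1-a)*(cos y + 1))" by (simp add: s2)
  have "((1-a)*W* sin y)^2 = W^2 * ((1-a)^2 * (sin y)^2)" by (simp add: power_mult_distrib)
  also have "\<dots> \<le> W^2 * (2 * (a + (1-a)*(cos y + 1)))" using k by (intro mult_left_mono) auto
  finally show ?thesis using den by (simp add: divide_le_eq algebra_simps)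
qed

locale setting =
  fixes \<rho> \<alpha> :: real
  assumes rho0: "0 < \<rho>" and rho1: "\<rho> < 1" and a0: "0 < \<alpha>" and a1: "\<alpha> \<le> 1/2"
    and a2: "\<alpha> \<le> 2*\<rho>" and a3: "\<alpha> \<le> 2*(1-\<rho>)"
begin

definition "L1 = (4*\<rho> - \<alpha>) / (16 - 8*\<alpha>)"
definition "L2 = L1 + \<rho>/2"
definition "R2 = L2 + 1/4"
definition "R1 = R2 + (1-\<rho>)/2"
definition "W1 = 2*pi/\<rho>"
definition "W2 = 2*pi/(1-\<rho>)"
definition "C1 u = \<alpha> + (1-\<alpha>)*(cos (W1*(u-L1)) + 1)"
definition "D1 u = - ((1-\<alpha>)*W1 * sin (W1*(u-L1)))"
definition "C2 u = \<alpha> + (1-\<alpha>)*(cos (W2*(R1-u)) + 1)"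
definition "D2 u = (1-\<alpha>)*W2 * sin (W2*(R1-u))"
definition "G = pw L1 L2 R2 R1 (\<lambda>_. 2-\<alpha>) C1 (\<lambda>_. \<alpha>) C2 (\<lambda>_. 2-\<alpha>)"
definition "Gd = pw L1 L2 R2 R1 (\<lambda>_. 0) D1 (\<lambda>_. 0) D2 (\<lambda>_. 0)"
definition "A0 u = (2-\<alpha>)*u"
definition "A1 u = u + (1-\<alpha>)* sin (W1*(u-L1))/W1 + (1-\<alpha>)*L1"
definition "A2 u = \<alpha>*u + (1-\<alpha>)*(L1+L2)"
definition "A3 u = u - (1-\<alpha>)* sin (W2*(R1-u))/W2 + (1-\<alpha>)*(L1+L2-R2)"
definition "A4 u = (2-\<alpha>)*u + (1-\<alpha>)*(L1+L2-R2-R1)"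
definition "AA = pw L1 L2 R2 R1 A0 A1 A2 A3 A4"

lemma den_pos: "16 - 8*\<alpha> > 0" using a1 by linarith

lemma W1_pos: "W1 > 0" using rho0 by (simp add: W1_def)
lemma W2_pos: "W2 > 0" using rho1 by (simp add: W2_def)
lemma W1_half: "W1 * (L2 - L1) = pi" using rho0 by (simp add: W1_def L2_def)
lemma W2_half: "W2 * (R1 - R2) = pi" using rho1 by (simp add: W2_def R1_def)
lemma order: "L1 < L2" "L2 < R2" "R2 < R1"
  using rho0 rho1 by (auto simp: L2_def R2_def R1_def)

lemma L1_lower: "\<alpha>/16 < L1 + \<alpha>/20 + 0 \<and> \<alpha>/16 \<le> L1"
proof -
  have "\<alpha> * (16 - 8*\<alpha>) \<le> 16*(4*\<rho> - \<alpha>)"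
    using a0 a2 by (simp add: algebra_simps) (smt (verit) mult_nonneg_nonneg a0)
  hence "\<alpha>/16 \<le> L1" unfolding L1_def using den_pos by (simp add: field_simps)
  thus ?thesis using a0 by simp
qed

lemma L1_upper: "L1 < 1/4 - \<alpha>/20"
proof -
  have "20*(4*\<rho> - \<alpha>) < (5-\<alpha>)*(16 - 8*\<alpha>)"
    using a0 a3 by (simp add: algebra_simps) (smt (verit) mult_pos_pos a0)
  hence "L1 < (5-\<alpha>)/20" unfolding L1_def using den_pos by (simp add: field_simps)
  thus ?thesis by simp
qed

lemma C1_L1: "C1 L1 = 2 - \<alpha>" by (simp add: C1_def)
lemma C1_L2: "C1 L2 = \<alpha>" by (simp add: C1_def W1_half)
lemma C2_R2: "C2 R2 = \<alpha>" by (simp add: C2_def W2_half)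
lemma C2_R1: "C2 R1 = 2 - \<alpha>" by (simp add: C2_def)
lemma D1_L1: "D1 L1 = 0" by (simp add: D1_def)
lemma D1_L2: "D1 L2 = 0" by (simp add: D1_def W1_half)
lemma D2_R2: "D2 R2 = 0" by (simp add: D2_def W2_half)
lemma D2_R1: "D2 R1 = 0" by (simp add: D2_def)

lemma C1_deriv: "(C1 has_real_derivative D1 u) (at u)"
  unfolding C1_def D1_def by (auto intro!: derivative_eq_intros)
lemma C2_deriv: "(C2 has_real_derivative D2 u) (at u)"
  unfolding C2_def D2_def by (auto intro!: derivative_eq_intros)

lemma G_deriv: "(G has_real_derivative Gd u) (at u)"
  unfolding G_def Gd_def
  by (rule pw_deriv[OF order]) (auto intro!: derivative_eq_intros C1_deriv C2_deriv
      simp: C1_L1 C1_L2 C2_R2 C2_R1 D1_L1 D1_L2 D2_R2 D2_R1)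

lemma G_cont: "continuous_on UNIV G"
  unfolding G_def
  by (rule pw_cont[OF order]) (auto intro!: continuous_intros simp: C1_def C2_def C1_L1[unfolded C1_def] C2_R1[unfolded C2_def] C1_L2[unfolded C1_def] C2_R2[unfolded C2_def])

lemma Gd_cont: "continuous_on UNIV Gd"
  unfolding Gd_def
  by (rule pw_cont[OF order]) (auto intro!: continuous_intros simp: D1_def D2_def D1_L1[unfolded D1_def] D2_R1[unfolded D2_def] D1_L2[unfolded D1_def] D2_R2[unfolded D2_def])

lemma G_ge: "G u \<ge> \<alpha>"
proof -
  have "(1-\<alpha>)*(cos x + 1) \<ge> 0" for x using a1 cos_ge_minus_one[of x] by (intro mult_nonneg_nonneg; linarith)
  thus ?thesis using a1 by (auto simp: G_def pw_def C1_def C2_def)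
qed

lemma G_pos: "G u > 0" using G_ge[of u] a0 by linarith

lemma AA_deriv: "(AA has_real_derivative G u) (at u)"
  unfolding AA_def G_def
proof (rule pw_deriv[OF order])
  show "(A0 has_real_derivative 2 - \<alpha>) (at u)" for u unfolding A0_def by (auto intro!: derivative_eq_intros)
  show "(A1 has_real_derivative C1 u) (at u)" for u unfolding A1_def C1_def
    using W1_pos by (auto intro!: derivative_eq_intros simp: field_simps)
  show "((\<lambda>u. A2 u) has_real_derivative \<alpha>) (at u)" for u unfolding A2_def by (auto intro!: derivative_eq_intros)
  show "(A3 has_real_derivative C2 u) (at u)" for u unfolding A3_def C2_def
    using W2_pos by (auto intro!: derivative_eq_intros simp: field_simps)
  show "(A4 has_real_derivative 2 - \<alpha>) (at u)" for u unfolding A4_def by (auto intro!: derivative_eq_intros)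
qed (use W1_half W2_half in \<open>auto simp: A0_def A1_def A2_def A3_def A4_def C1_L1 C1_L2 C2_R2 C2_R1 algebra_simps\<close>)

lemma l_eqs: "l1 \<rho> \<alpha> s = L1 + s" "l2 \<rho> \<alpha> s = L2 + s" "r2 \<rho> \<alpha> s = R2 + s" "r1 \<rho> \<alpha> s = R1 + s"
  "w1 \<rho> = W1" "w2 \<rho> = W2"
  by (simp_all add: l1_def l2_def r2_def r1_def L1_def L2_def R2_def R1_def w1_def w2_def W1_def W2_def)

lemma cos_aux: "R1 + s \<le> x \<Longrightarrow> x - s \<le> R1 \<Longrightarrow> cos (W2 * (R1 - (x - s))) = 1"
  by (subgoal_tac "R1 - (x - s) = 0") auto

lemma fdens_G: "fdens \<rho> \<alpha> s x = indicator {0..1} x * G (x - s)"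
proof (cases "0 \<le> x \<and> x \<le> 1")
  case True
  have e1: "x - (L1 + s) = x - s - L1" "R1 + s - x = R1 - (x - s)" by simp_all
  show ?thesis using True order
    unfolding fdens_def l_eqs G_def pw_def e1 C1_def C2_def by (auto simp: cos_aux)
next
  case False
  then show ?thesis unfolding fdens_def by auto
qed

lemma R1_L1: "R1 = L1 + 3/4" by (simp add: R1_def R2_def L2_def field_simps)

context
  fixes \<theta> :: real
  assumes th1: "-\<alpha>/20 \<le> \<theta>" and th2: "\<theta> \<le> \<alpha>/20"
begin

lemma th_left: "-\<theta> < L1" using L1_lower th1 th2 a0 by linarith
lemma th_right: "R1 < 1 - \<theta>" using L1_upper th1 th2 R1_L1 by linarith

lemma int_G: "((\<lambda>x. G (x - \<theta>)) has_integral 1) {0..1}"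
proof -
  have "((\<lambda>x. G (x - \<theta>)) has_integral (AA (1 - \<theta>) - AA (0 - \<theta>))) {0..1}"
  proof (rule fundamental_theorem_of_calculus)
    fix x :: real
    have "((\<lambda>x. AA (x - \<theta>)) has_real_derivative G (x - \<theta>) * 1) (at x)"
      by (rule DERIV_chain2[OF AA_deriv]) (auto intro!: derivative_eq_intros)
    then show "((\<lambda>x. AA (x - \<theta>)) has_vector_derivative G (x - \<theta>)) (at x within {0..1})"
      by (simp add: has_real_derivative_iff_has_vector_derivative[symmetric] has_field_derivative_at_within)
  qed simp
  also have "AA (1 - \<theta>) - AA (0 - \<theta>) = 1"
    using th_left th_right order
    by (simp add: AA_def pw_def A0_def A4_def R1_L1 R2_def L2_def algebra_simps)
  finally show ?thesis .
qed

lemma int_Gd: "((\<lambda>x. Gd (x - \<theta>)) has_integral 0) {0..1}"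
proof -
  have "((\<lambda>x. Gd (x - \<theta>)) has_integral (G (1 - \<theta>) - G (0 - \<theta>))) {0..1}"
  proof (rule fundamental_theorem_of_calculus)
    fix x :: real
    have "((\<lambda>x. G (x - \<theta>)) has_real_derivative Gd (x - \<theta>) * 1) (at x)"
      by (rule DERIV_chain2[OF G_deriv]) (auto intro!: derivative_eq_intros)
    then show "((\<lambda>x. G (x - \<theta>)) has_vector_derivative Gd (x - \<theta>)) (at x within {0..1})"
      by (simp add: has_real_derivative_iff_has_vector_derivative[symmetric] has_field_derivative_at_within)
  qed simp
  also have "G (1 - \<theta>) - G (0 - \<theta>) = 0"
    using th_left th_right order by (simp add: G_def pw_def)
  finally show ?thesis .
qed


lemma G_shift_cont: "continuous_on S (\<lambda>x. G (x - \<theta>))"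
  by (rule continuous_on_compose2[OF G_cont]) (auto intro!: continuous_intros)
lemma Gd_shift_cont: "continuous_on S (\<lambda>x. Gd (x - \<theta>))"
  by (rule continuous_on_compose2[OF Gd_cont]) (auto intro!: continuous_intros)

lemma I0: "integrable lborel (\<lambda>x. indicator {0..1} x * G (x - \<theta>))"
  "(LINT x|lborel. indicator {0..1} x * G (x - \<theta>)) = 1"
  using cont_integrable[OF G_shift_cont] cont_LINT[OF G_shift_cont int_G] by auto

lemma e1: "indicator {0..1} x * G (x - \<theta>) * (Gd (x - \<theta>) / G (x - \<theta>)) = indicator {0..1} x * Gd (x - \<theta>)"
  using G_pos[of "x - \<theta>"] by simp

lemma I1: "integrable lborel (\<lambda>x. indicator {0..1} x * G (x - \<theta>) * (Gd (x - \<theta>) / G (x - \<theta>)))"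
  "(LINT x|lborel. indicator {0..1} x * G (x - \<theta>) * (Gd (x - \<theta>) / G (x - \<theta>))) = 0"
  unfolding e1 using cont_integrable[OF Gd_shift_cont] cont_LINT[OF Gd_shift_cont int_Gd] by auto

lemma e2: "indicator {0..1} x * G (x - \<theta>) * (Gd (x - \<theta>) / G (x - \<theta>)) * (Gd (x - \<theta>) / G (x - \<theta>))
   = indicator {0..1} x * ((Gd (x - \<theta>))^2 / G (x - \<theta>))"
  using G_pos[of "x - \<theta>"] by (simp add: power2_eq_square)

lemma cont2: "continuous_on S (\<lambda>x. (Gd (x - \<theta>))^2 / G (x - \<theta>))"
  by (intro continuous_intros G_shift_cont Gd_shift_cont) (metis G_pos less_irrefl)

lemma pt_bound: "indicator {0..1} x * ((Gd (x - \<theta>))^2 / G (x - \<theta>))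
   \<le> 2*W1^2 * indicator {L1+\<theta>..L2+\<theta>} x + 2*W2^2 * indicator {R2+\<theta>..R1+\<theta>} x"
proof -
  have nn: "0 \<le> 2*W1^2 * indicator {L1+\<theta>..L2+\<theta>} x + 2*W2^2 * indicator {R2+\<theta>..R1+\<theta>} x"
    by simp
  have q0: "0 \<le> (Gd (x-\<theta>))^2 / G (x-\<theta>)" using G_pos[of "x-\<theta>"] by simp
  have q1: "indicator {0..1} x * ((Gd (x-\<theta>))^2 / G (x-\<theta>)) \<le> (Gd (x-\<theta>))^2 / G (x-\<theta>)"
    using q0 by (simp add: indicator_def)
  have q2: "0 \<le> 2*W2^2 * indicator {R2+\<theta>..R1+\<theta>} x" "0 \<le> 2*W1^2 * indicator {L1+\<theta>..L2+\<theta>} x" by simp_all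
  consider "x - \<theta> \<le> L1" | "L1 < x - \<theta> \<and> x - \<theta> \<le> L2" | "L2 < x - \<theta> \<and> x - \<theta> \<le> R2"
    | "R2 < x - \<theta> \<and> x - \<theta> \<le> R1" | "R1 < x - \<theta>" by linarith
  then show ?thesis
  proof cases
    case 2
    have "(Gd (x - \<theta>))^2 / G (x - \<theta>) \<le> 2*W1^2"
      using 2 ratio_bound[of \<alpha> W1 "W1 * (x - \<theta> - L1)"] a0 a1
      by (simp add: Gd_def G_def pw_def D1_def C1_def power_mult_distrib)
    moreover have ind: "indicator {L1+\<theta>..L2+\<theta>} x = (1::real)" using 2 by (simp add: indicator_def)
    ultimately show ?thesis using q1 q2 unfolding ind by linarith
  next
    case 4
    have "(Gd (x - \<theta>))^2 / G (x - \<theta>) \<le> 2*W2^2"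
      using 4 order ratio_bound[of \<alpha> W2 "W2 * (R1 - (x - \<theta>))"] a0 a1
      by (simp add: Gd_def G_def pw_def D2_def C2_def power_mult_distrib)
    moreover have ind: "indicator {R2+\<theta>..R1+\<theta>} x = (1::real)" using 4 by (simp add: indicator_def)
    ultimately show ?thesis using q1 q2 unfolding ind by linarith
  qed (use nn order in \<open>auto simp: Gd_def pw_def\<close>)
qed

lemma I2: "integrable lborel (\<lambda>x. indicator {0..1} x * G (x - \<theta>) * (Gd (x - \<theta>) / G (x - \<theta>)) * (Gd (x - \<theta>) / G (x - \<theta>)))"
  "(LINT x|lborel. indicator {0..1} x * G (x - \<theta>) * (Gd (x - \<theta>) / G (x - \<theta>)) * (Gd (x - \<theta>) / G (x - \<theta>)))
     \<le> 4 * pi^2 / (\<rho> * (1 - \<rho>))"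
proof -
  show int: "integrable lborel (\<lambda>x. indicator {0..1} x * G (x - \<theta>) * (Gd (x - \<theta>) / G (x - \<theta>)) * (Gd (x - \<theta>) / G (x - \<theta>)))"
    unfolding e2 by (rule cont_integrable[OF cont2])
  have intK: "integrable lborel (\<lambda>x. 2*W1^2 * indicator {L1+\<theta>..L2+\<theta>} x + 2*W2^2 * indicator {R2+\<theta>..R1+\<theta>} x)"
    by (intro Bochner_Integration.integrable_add integrable_mult_right) (auto simp: integrable_indicator_iff emeasure_lborel_Icc_eq)
  have "(LINT x|lborel. indicator {0..1} x * G (x - \<theta>) * (Gd (x - \<theta>) / G (x - \<theta>)) * (Gd (x - \<theta>) / G (x - \<theta>)))
     \<le> (LINT x|lborel. 2*W1^2 * indicator {L1+\<theta>..L2+\<theta>} x + 2*W2^2 * indicator {R2+\<theta>..R1+\<theta>} x)"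
    unfolding e2 by (rule integral_mono[OF int[unfolded e2] intK pt_bound])
  also have "\<dots> = 2*W1^2 * (L2 - L1) + 2*W2^2 * (R1 - R2)"
    using order by (subst Bochner_Integration.integral_add) (auto simp: integrable_indicator_iff emeasure_lborel_Icc_eq)
  also have "\<dots> = 4 * pi^2 / (\<rho> * (1 - \<rho>))"
  proof -
    have "2*W1^2 * (L2 - L1) = 2*W1*(W1 * (L2 - L1))" by (simp add: power2_eq_square)
    also have "\<dots> = 4*pi^2/\<rho>" unfolding W1_half by (simp add: W1_def power2_eq_square)
    finally have 1: "2*W1^2 * (L2 - L1) = 4*pi^2/\<rho>" .
    have "2*W2^2 * (R1 - R2) = 2*W2*(W2 * (R1 - R2))" by (simp add: power2_eq_square)
    also have "\<dots> = 4*pi^2/(1-\<rho>)" unfolding W2_half by (simp add: W2_def power2_eq_square)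
    finally have 2: "2*W2^2 * (R1 - R2) = 4*pi^2/(1-\<rho>)" .
    note 1 2
    moreover have "4*pi^2/\<rho> + 4*pi^2/(1-\<rho>) = 4 * pi^2 / (\<rho> * (1 - \<rho>))" using rho0 rho1 by (simp add: field_simps)
    ultimately show ?thesis by simp
  qed
  finally show "(LINT x|lborel. indicator {0..1} x * G (x - \<theta>) * (Gd (x - \<theta>) / G (x - \<theta>)) * (Gd (x - \<theta>) / G (x - \<theta>)))
     \<le> 4 * pi^2 / (\<rho> * (1 - \<rho>))" .
qed

lemma fisher_eq: "fisher_info \<rho> \<alpha> t \<theta> \<le> ennreal (4 * pi^2 * real t / (\<rho> * (1 - \<rho>)))"
proof -
  define \<phi> where "\<phi> y = indicator {0..1} y * G (y - \<theta>)" for y :: real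
  define b where "b y = Gd (y - \<theta>) / G (y - \<theta>)" for y :: real
  define fk where "fk i j k y = \<phi> y * (if k = i then b y else 1) * (if k = j then b y else 1)" for i j k :: nat and y
  define F where "F X = (\<Sum>i<t. \<Sum>j<t. \<Prod>k<t. fk i j k (X k))" for X :: "nat \<Rightarrow> real"
  define I where "I = (LINT y|lborel. \<phi> y * b y * b y)"
  have phi_nn: "0 \<le> \<phi> y" for y using G_pos[of "y - \<theta>"] by (simp add: \<phi>_def)
  have Fid: "F X = (\<Prod>k<t. \<phi> (X k)) * (\<Sum>k<t. b (X k))^2" for X
  proof -
    have "(\<Prod>k<t. fk i j k (X k)) = (\<Prod>k<t. \<phi> (X k)) * b (X i) * b (X j)" if "i < t" "j < t" for i j
      using that by (simp add: fk_def prod.distrib prod.delta)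
    then have "F X = (\<Sum>i<t. \<Sum>j<t. (\<Prod>k<t. \<phi> (X k)) * b (X i) * b (X j))"
      unfolding F_def by (intro sum.cong refl) auto
    also have "\<dots> = (\<Prod>k<t. \<phi> (X k)) * ((\<Sum>k<t. b (X k)) * (\<Sum>k<t. b (X k)))"
      by (subst sum_product) (simp only: sum_distrib_left mult.assoc)
    finally show ?thesis by (simp add: power2_eq_square)
  qed
  have pointwise: "joint_dens \<rho> \<alpha> t \<theta> X * (deriv (\<lambda>s. ln (joint_dens \<rho> \<alpha> t s X)) \<theta>)\<^sup>2 = F X" for X
  proof (cases "\<forall>k<t. X k \<in> {0..1}")
    case True
    have jd: "joint_dens \<rho> \<alpha> t s X = (\<Prod>k<t. G (X k - s))" for s
      unfolding joint_dens_def fdens_G using True by (intro prod.cong) auto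
    have lnj: "(\<lambda>s. ln (joint_dens \<rho> \<alpha> t s X)) = (\<lambda>s. \<Sum>k<t. ln (G (X k - s)))"
      unfolding jd by (intro ext ln_prod) (simp, metis G_pos less_irrefl)
    have d: "((\<lambda>s. \<Sum>k<t. ln (G (X k - s))) has_real_derivative (\<Sum>k<t. 1 / G (X k - \<theta>) * (Gd (X k - \<theta>) * -1))) (at \<theta>)"
    proof (rule DERIV_sum)
      fix k
      have inner: "((\<lambda>s. X k - s) has_real_derivative -1) (at \<theta>)"
        by (auto intro!: derivative_eq_intros)
      show "((\<lambda>s. ln (G (X k - s))) has_real_derivative 1 / G (X k - \<theta>) * (Gd (X k - \<theta>) * -1)) (at \<theta>)"
        by (rule DERIV_chain2[OF DERIV_ln_divide[OF G_pos] DERIV_chain2[OF G_deriv inner]])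
    qed
    have dv: "deriv (\<lambda>s. ln (joint_dens \<rho> \<alpha> t s X)) \<theta> = - (\<Sum>k<t. b (X k))"
      unfolding lnj using DERIV_imp_deriv[OF d] by (simp add: b_def sum_negf)
    have "joint_dens \<rho> \<alpha> t \<theta> X = (\<Prod>k<t. \<phi> (X k))"
      unfolding joint_dens_def fdens_G \<phi>_def ..
    then show ?thesis unfolding dv Fid by simp
  next
    case False
    then obtain k where k: "k < t" "X k \<notin> {0..1}" by auto
    have "(\<Prod>k<t. \<phi> (X k)) = 0" using k by (intro prod_zero) (auto simp: \<phi>_def intro!: bexI[of _ k])
    moreover have "joint_dens \<rho> \<alpha> t \<theta> X = (\<Prod>k<t. \<phi> (X k))"
      unfolding joint_dens_def fdens_G \<phi>_def ..
    ultimately show ?thesis unfolding Fid by simp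
  qed
  have Fnn: "0 \<le> F X" for X unfolding Fid by (intro mult_nonneg_nonneg prod_nonneg phi_nn) auto
  interpret P: product_sigma_finite "\<lambda>_::nat. lborel :: real measure"
    by unfold_locales
  have intk: "integrable lborel (fk i j k)" for i j k
  proof -
    have e: "fk i j k = (if k = i \<and> k = j then (\<lambda>y. \<phi> y * b y * b y) else if k = i then (\<lambda>y. \<phi> y * b y)
       else if k = j then (\<lambda>y. \<phi> y * b y) else \<phi>)" by (auto simp: fun_eq_iff fk_def)
    have "integrable lborel \<phi>" "integrable lborel (\<lambda>y. \<phi> y * b y)" "integrable lborel (\<lambda>y. \<phi> y * b y * b y)"
      using I0(1) I1(1) I2(1) unfolding \<phi>_def[abs_def] b_def[abs_def] by auto
    then show ?thesis unfolding e by auto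
  qed
  have intF: "integrable (PiM {..<t} (\<lambda>_. lborel)) F"
    unfolding F_def
    by (intro Bochner_Integration.integrable_sum P.product_integrable_prod intk) auto
  have I0': "(LINT y|lborel. fk i j k y) = 1" if "k \<noteq> i" "k \<noteq> j" for i j k
    using that I0 by (simp add: fk_def \<phi>_def)
  have I1': "(LINT y|lborel. fk i j i y) = 0" if "i \<noteq> j" for i j
    using that I1 by (simp add: fk_def \<phi>_def b_def mult.assoc[symmetric])
  have I2': "(LINT y|lborel. fk i i i y) = I" for i
    by (simp add: fk_def I_def)
  have "integral\<^sup>L (PiM {..<t} (\<lambda>_. lborel)) F = (\<Sum>i<t. \<Sum>j<t. \<Prod>k<t. (LINT y|lborel. fk i j k y))"
    unfolding F_def
    by (subst Bochner_Integration.integral_sum, (intro Bochner_Integration.integrable_sum P.product_integrable_prod intk; simp))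
       (intro sum.cong refl, subst Bochner_Integration.integral_sum, (intro P.product_integrable_prod intk; simp),
        intro sum.cong refl P.product_integral_prod intk, auto)
  also have "\<dots> = (\<Sum>i<t. I)"
  proof (intro sum.cong refl)
    fix i assume i: "i \<in> {..<t}"
    have "(\<Prod>k<t. (LINT y|lborel. fk i j k y)) = (if j = i then I else 0)" if j: "j \<in> {..<t}" for j
    proof (cases "j = i")
      case True
      have "(\<Prod>k<t. (LINT y|lborel. fk i j k y)) = (\<Prod>k<t. if k = i then I else 1)"
        using True I0' I2' by (intro prod.cong refl) auto
      also have "\<dots> = I" using i by (simp add: prod.delta)
      finally show ?thesis using True by simp
    next
      case False
      have "(\<Prod>k<t. (LINT y|lborel. fk i j k y)) = 0"
        using False I1'[of i j] i by (intro prod_zero) (auto intro!: bexI[of _ i])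
      then show ?thesis using False by simp
    qed
    then have "(\<Sum>j<t. \<Prod>k<t. (LINT y|lborel. fk i j k y)) = (\<Sum>j<t. if j = i then I else 0)"
      by (intro sum.cong refl) auto
    also have "\<dots> = I" using i by (simp add: sum.delta)
    finally show "(\<Sum>j<t. \<Prod>k<t. (LINT y|lborel. fk i j k y)) = I" .
  qed
  also have "\<dots> = real t * I" by simp
  finally have LF: "integral\<^sup>L (PiM {..<t} (\<lambda>_. lborel)) F = real t * I" .
  have "fisher_info \<rho> \<alpha> t \<theta> = (\<integral>\<^sup>+ X. ennreal (F X) \<partial>PiM {..<t} (\<lambda>_. lborel))"
    unfolding fisher_info_def pointwise ..
  also have "\<dots> = ennreal (integral\<^sup>L (PiM {..<t} (\<lambda>_. lborel)) F)"
    by (rule nn_integral_eq_integral[OF intF]) (simp add: Fnn)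
  also have "\<dots> = ennreal (real t * I)" by (simp add: LF)
  also have "\<dots> \<le> ennreal (4 * pi^2 * real t / (\<rho> * (1 - \<rho>)))"
  proof (rule ennreal_leI)
    have "I \<le> 4 * pi^2 / (\<rho> * (1 - \<rho>))" using I2(2) by (simp add: I_def \<phi>_def b_def)
    then have "real t * I \<le> real t * (4 * pi^2 / (\<rho> * (1 - \<rho>)))" by (intro mult_left_mono) auto
    then show "real t * I \<le> 4 * pi^2 * real t / (\<rho> * (1 - \<rho>))" by (simp add: field_simps)
  qed
  finally show ?thesis .
qed

end

end

theorem lemma4:
  fixes \<rho> \<alpha> :: real
  assumes "0 < \<rho>" and "\<rho> < 1" and "0 < \<alpha>"
    and "\<alpha> \<le> min (1/2) (min (2*\<rho>) (2*(1 - \<rho>)))"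
  shows "\<forall>t::nat. t \<ge> 1 \<longrightarrow> (\<forall>\<theta> \<in> {-\<alpha>/20 .. \<alpha>/20}.
           fisher_info \<rho> \<alpha> t \<theta> \<le> ennreal (4 * pi^2 * real t / (\<rho> * (1 - \<rho>))))"
proof (intro allI impI ballI)
  fix t :: nat and \<theta> :: real
  assume "\<theta> \<in> {-\<alpha>/20 .. \<alpha>/20}"
  then have th: "-\<alpha>/20 \<le> \<theta>" "\<theta> \<le> \<alpha>/20" by auto
  interpret setting \<rho> \<alpha> using assms by unfold_locales auto
  show "fisher_info \<rho> \<alpha> t \<theta> \<le> ennreal (4 * pi^2 * real t / (\<rho> * (1 - \<rho>)))"
    by (rule fisher_eq[OF th])
qed

end
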